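(* Let $p,n\in\mathbb{N}$ with $p\ge1$ even, $n\ge p+\frac p2$, and $r\in\mathbb{N}$ with $r\le p$. Then $$\overline{X}^{p,r,0}=n^{2r-1}\big(T_n^{\bm\alpha}-H_n^{\bm\alpha,1}\big),$$ where $\alpha_k=(-1)^r\mathcal{N}_{2p+1}^{(2r)}(p+1-k)$, $k=0,\dots,p$.
   Context: Cardinal B-spline: $\mathcal{N}_0(t)=1$ for $t\in[0,1)$, $0$ otherwise; $\mathcal{N}_p(t)=\frac{t}{p}\mathcal{N}_{p-1}(t)+\frac{p+1-t}{p}\mathcal{N}_{p-1}(t-1)$, $p\ge1$ (support $[0,p+1]$, $C^{p-1}$). Reduced-space basis ($p$ even): with $C_c(x)=\mathcal{N}_p\big(nx-c+\tfrac{p+1}{2}\big)$, for $i=1,\dots,n$, $x\in[0,1]$, $$\overline{N}^p_{i,0}(x)=\sum_{m\in\mathbb{Z}}\Big(C_{i-\frac12+2mn}(x)-C_{-(i-\frac12)+2mn}(x)\Big).$$ These form a basis of the $C^{p-1}$ splines of degree $p$ with breakpoints $k/n$ whose derivatives of all even orders $\le p-1$ vanish at $0$ and $1$. $\overline{X}^{p,r,0}_{i,j}=\int_0^1(\overline{N}^p_{i,0})^{(r)}(\overline{N}^p_{j,0})^{(r)}\,\mathrm{d}x$ (piecewise derivatives if $r=p$). With $\alpha_k=0$ for $k>p$: $(T_n^{\bm\alpha})_{i,j}=\alpha_{|i-j|}$ and $(H_n^{\bm\alpha,1})_{i,j}=\alpha_{i+j-1}+\alpha_{2n+1-i-j}$.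 *)

theory Defs
  imports "HOL-Analysis.Analysis"
begin

fun cardB :: "nat \<Rightarrow> real \<Rightarrow> real" where
  "cardB 0 t = (if 0 \<le> t \<and> t < 1 then 1 else 0)"
| "cardB (Suc q) t = t / real (Suc q) * cardB q t
                     + (real (Suc q) + 1 - t) / real (Suc q) * cardB q (t - 1)"

definition shiftB :: "nat \<Rightarrow> nat \<Rightarrow> real \<Rightarrow> real \<Rightarrow> real" where
  "shiftB p n c x = cardB p (real n * x - c + (real p + 1) / 2)"

text \<open>Reduced-space basis function bar N^p_{i,0} (defined on all reals via the
  locally finite sum over m in Z).\<close>
definition redB :: "nat \<Rightarrow> nat \<Rightarrow> nat \<Rightarrow> real \<Rightarrow> real" where
  "redB p n i x = (\<Sum>\<^sub>\<infinity>m::int.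
      shiftB p n (real i - 1/2 + 2 * real_of_int m * real n) x
    - shiftB p n (- (real i - 1/2) + 2 * real_of_int m * real n) x)"

text \<open>Matrix entries bar X^{p,r,0}_{i,j}; the r-th derivative is the iterated
  derivative (for r = p it agrees with the piecewise derivative except at
  finitely many points, which does not affect the integral).\<close>
definition Xbar :: "nat \<Rightarrow> nat \<Rightarrow> nat \<Rightarrow> nat \<Rightarrow> nat \<Rightarrow> real" where
  "Xbar p r n i j = integral {0..1}
      (\<lambda>x. (deriv ^^ r) (redB p n i) x * (deriv ^^ r) (redB p n j) x)"

definition alphaSeq :: "nat \<Rightarrow> nat \<Rightarrow> nat \<Rightarrow> real" where
  "alphaSeq p r k = (if k \<le> p then
      (-1) ^ r * (deriv ^^ (2 * r)) (cardB (2 * p + 1)) (real p + 1 - real k) else 0)"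

definition toepM :: "(nat \<Rightarrow> real) \<Rightarrow> nat \<Rightarrow> nat \<Rightarrow> real" where
  "toepM \<alpha> i j = \<alpha> (nat \<bar>int i - int j\<bar>)"

definition hankM :: "(nat \<Rightarrow> real) \<Rightarrow> nat \<Rightarrow> nat \<Rightarrow> nat \<Rightarrow> real" where
  "hankM \<alpha> n i j = \<alpha> (i + j - 1) + \<alpha> (2 * n + 1 - i - j)"

end

theory Submission
  imports Defs
begin


lemma tp_deriv: "((\<lambda>x::real. (max 0 x)^2) has_real_derivative 2 * max 0 x) (at x)"
proof (cases "x = 0")
  case True
  have "((\<lambda>y::real. max 0 y) \<longlongrightarrow> 0) (at 0)"
    by (intro tendsto_eq_intros) auto
  then have "((\<lambda>y::real. ((max 0 y)^2 - (max 0 0)^2) / (y - 0)) \<longlongrightarrow> 0) (at 0)"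
    apply (rule Lim_transform_within[where d=1])
    by (auto simp: max_def power2_eq_square)
  then show ?thesis using True by (simp add: has_field_derivative_iff)
next
  case False
  show ?thesis
  proof (cases "x < 0")
    case True
    have "((\<lambda>x::real. 0) has_real_derivative 2 * max 0 x) (at x)" using True by simp
    then show ?thesis
      apply (rule has_field_derivative_transform_within_open[where S="{..<0}"])
      using True by auto
  next
    case False
    with \<open>x \<noteq> 0\<close> have x: "x > 0" by auto
    have "((\<lambda>x::real. x^2) has_real_derivative 2 * max 0 x) (at x)"
      using x by (auto intro!: derivative_eq_intros)
    then show ?thesis
      apply (rule has_field_derivative_transform_within_open[where S="{0<..}"])
      using x by auto
  qed
qed


lemma cardB_out: "t < 0 \<or> real p + 1 \<le> t \<Longrightarrow> cardB p t = 0"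
  by (induction p arbitrary: t) auto

lemma cardB_Suc0: "cardB (Suc q) 0 = 0"
  by (simp add: cardB_out)

lemma cardB1: "cardB 1 t = max 0 (1 - \<bar>t - 1\<bar>)"
  by (auto simp: max_def abs_if)

lemma cardB2: "cardB 2 t = ((max 0 t)^2 - 3*(max 0 (t-1))^2 + 3*(max 0 (t-2))^2 - (max 0 (t-3))^2)/2"
proof -
  have e: "cardB 2 t = cardB (Suc (Suc 0)) t" by (simp add: numeral_2_eq_2)
  show ?thesis unfolding e
    by (auto simp: max_def power2_eq_square field_simps)
qed

lemma cardB_cont: "p \<ge> 1 \<Longrightarrow> continuous_on UNIV (cardB p)"
proof (induction p rule: nat_induct_at_least)
  case base
  show ?case unfolding cardB1[abs_def] by (intro continuous_intros)
next
  case (Suc q)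
  have "continuous_on UNIV (\<lambda>t. cardB q (t - 1))"
    by (rule continuous_on_compose2[OF Suc.IH]) (auto intro: continuous_intros)
  then show ?case using Suc.IH
    by (simp only: cardB.simps) (intro continuous_intros; simp)
qed

lemma alg: fixes d c t A B C X Y :: real
  assumes "d > 0" "c = d + 1" "X = t/d*A + (d+1-t)/d*B" "Y = (t-1)/d*B + (d+1-(t-1))/d*C"
  shows "1/c*X + t/c*(A-B) + ((-1)/c*Y + (c+1-t)/c*(B-C)) = X - Y"
proof -
  have c: "c > 0" using assms by simp
  have dX: "d*X = t*A + (d+1-t)*B" unfolding assms(3) using assms(1) by (simp add: field_simps)
  have dY: "d*Y = (t-1)*B + (d+2-t)*C" unfolding assms(4) using assms(1) by (simp add: field_simps)
  have "c * (1/c*X + t/c*(A-B) + ((-1)/c*Y + (c+1-t)/c*(B-C))) = X + t*(A-B) - Y + (c+1-t)*(B-C)"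
    using c by (simp add: field_simps)
  also have "\<dots> = X - Y + (t*A + (d+1-t)*B) - ((t-1)*B + (d+2-t)*C)"
    using assms(2) by (simp add: algebra_simps)
  also have "\<dots> = X - Y + d*X - d*Y" using dX dY by simp
  also have "\<dots> = c * (X - Y)" using assms(2) by (simp add: algebra_simps)
  finally show ?thesis using c by simp
qed

definition tp :: "real \<Rightarrow> real" where "tp x = (max 0 x)^2"
lemma tp_sh: "((\<lambda>x. tp (x - c)) has_real_derivative 2 * max 0 (t - c)) (at t)"
  using tp_deriv[of "t - c"] DERIV_shift[of "\<lambda>x. (max 0 x)^2" _ t "-c"] unfolding tp_def by simp

lemma cardB_deriv2: "2 \<le> p \<Longrightarrow> (cardB p has_real_derivative cardB (p - 1) t - cardB (p - 1) (t - 1)) (at t)"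
proof (induction p arbitrary: t rule: nat_induct_at_least)
  case base
  have D: "((\<lambda>t. (tp (t - 0) - 3*tp (t-1) + 3*tp (t-2) - tp (t-3))/2)
     has_real_derivative (2*max 0 (t-0) - 3*(2*max 0 (t-1)) + 3*(2*max 0 (t-2)) - 2*max 0 (t-3))/2) (at t)"
    by (intro DERIV_cdivide DERIV_diff DERIV_add DERIV_cmult tp_sh)
  have eqV: "(2*max 0 (t-0) - 3*(2*max 0 (t-1)) + 3*(2*max 0 (t-2)) - 2*max 0 (t-3))/2
      = cardB (2 - 1) t - cardB (2 - 1) (t - 1)"
    by (simp add: cardB1) (auto simp: max_def abs_if)
  have fe: "cardB 2 = (\<lambda>t. (tp (t - 0) - 3*tp (t-1) + 3*tp (t-2) - tp (t-3))/2)"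
    by (rule ext) (simp add: cardB2 tp_def)
  show ?case apply (subst fe) apply (subst eqV[symmetric]) by (rule D)
next
  case (Suc q)
  obtain r where q: "q = Suc r" using Suc.hyps by (cases q) auto
  have d1: "(cardB q has_real_derivative cardB r t - cardB r (t - 1)) (at t)"
    using Suc.IH[of t] q by (simp del: cardB.simps)
  have d2: "((\<lambda>x. cardB q (x - 1)) has_real_derivative cardB r (t - 1) - cardB r (t - 1 - 1)) (at t)"
    using Suc.IH[of "t - 1"] q DERIV_shift[of "cardB q" _ t "-1"] by (simp del: cardB.simps)
  define c where "c = real (Suc q)"
  have c0: "c \<noteq> 0" by (simp add: c_def)
  have e1: "((\<lambda>t. t / c) has_real_derivative 1/c) (at t)" using c0 by (auto intro!: derivative_eq_intros)
  have e2: "((\<lambda>t. (c + 1 - t)/c) has_real_derivative (-1)/c) (at t)" using c0 by (auto intro!: derivative_eq_intros)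
  have "((\<lambda>t. t / c * cardB q t + (c + 1 - t) / c * cardB q (t - 1))
     has_real_derivative
      (1 / c * cardB q t + (cardB r t - cardB r (t - 1)) * (t / c)
       + ((-1) / c * cardB q (t-1) + (cardB r (t - 1) - cardB r (t - 1 - 1)) * ((c + 1 - t) / c)))) (at t)"
    by (rule DERIV_add[OF DERIV_mult[OF e1 d1] DERIV_mult[OF e2 d2]])
  then have "((\<lambda>t. t / real (Suc q) * cardB q t + (real (Suc q) + 1 - t) / real (Suc q) * cardB q (t - 1))
     has_real_derivative
      (1 / real (Suc q) * cardB q t + t / real (Suc q) * (cardB r t - cardB r (t - 1))
       + ((-1) / real (Suc q) * cardB q (t-1) + (real (Suc q) + 1 - t) / real (Suc q) * (cardB r (t - 1) - cardB r (t - 1 - 1))))) (at t)"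
    unfolding c_def by (simp only: mult.commute)
  moreover have "1 / real (Suc q) * cardB q t + t / real (Suc q) * (cardB r t - cardB r (t - 1))
       + ((-1) / real (Suc q) * cardB q (t-1) + (real (Suc q) + 1 - t) / real (Suc q) * (cardB r (t - 1) - cardB r (t - 1 - 1)))
     = cardB q t - cardB q (t - 1)"
  proof -
    have a: "cardB q t = t / real (Suc r) * cardB r t + (real (Suc r) + 1 - t) / real (Suc r) * cardB r (t - 1)"
      using q by simp
    have b: "cardB q (t-1) = (t-1) / real (Suc r) * cardB r (t-1) + (real (Suc r) + 1 - (t-1)) / real (Suc r) * cardB r (t - 1 - 1)"
      using q by simp
    show ?thesis by (rule alg[OF _ _ a b]) (use q in auto)
  qed
  ultimately show ?case
    apply (subst cardB.simps(2)[abs_def])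
    by (simp del: cardB.simps)
qed


lemma cardB_deriv1: assumes "t \<notin> \<int>"
  shows "(cardB 1 has_real_derivative cardB 0 t - cardB 0 (t - 1)) (at t)"
proof -
  have t0: "t \<noteq> 0" "t \<noteq> 1" "t \<noteq> 2" using assms by (metis Ints_0 Ints_1 Ints_numeral)+
  consider "t < 0" | "0 < t" "t < 1" | "1 < t" "t < 2" | "2 < t" using t0 by linarith
  then show ?thesis
  proof cases
    case 1
    have "((\<lambda>x::real. 0) has_real_derivative cardB 0 t - cardB 0 (t - 1)) (at t)" using 1 by simp
    then show ?thesis
      by (rule has_field_derivative_transform_within_open[where S="{..<0}"]) (use 1 in \<open>auto simp: cardB_out\<close>)
  next
    case 2
    have "((\<lambda>x::real. x) has_real_derivative cardB 0 t - cardB 0 (t - 1)) (at t)" using 2 by simp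
    then show ?thesis
      by (rule has_field_derivative_transform_within_open[where S="{0<..<1}"]) (use 2 in \<open>auto simp: cardB1\<close>)
  next
    case 3
    have "((\<lambda>x::real. 2 - x) has_real_derivative cardB 0 t - cardB 0 (t - 1)) (at t)" using 3
      by (auto intro!: derivative_eq_intros)
    then show ?thesis
      by (rule has_field_derivative_transform_within_open[where S="{1<..<2}"]) (use 3 in \<open>auto simp: cardB1\<close>)
  next
    case 4
    have "((\<lambda>x::real. 0) has_real_derivative cardB 0 t - cardB 0 (t - 1)) (at t)" using 4 by simp
    then show ?thesis
      by (rule has_field_derivative_transform_within_open[where S="{2<..}"]) (use 4 in \<open>auto simp: cardB1\<close>)
  qed
qed

lemma cardB_deriv: "t \<notin> \<int> \<or> p \<ge> 1 \<Longrightarrow>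
   (cardB (Suc p) has_real_derivative cardB p t - cardB p (t - 1)) (at t)"
proof (cases "p \<ge> 1")
  case True
  then show ?thesis using cardB_deriv2[of "Suc p" t] by simp
next
  case False
  assume "t \<notin> \<int> \<or> p \<ge> 1"
  then have t: "t \<notin> \<int>" and p0: "p = 0" using False by auto
  show ?thesis unfolding p0 using cardB_deriv1[OF t] by (simp only: One_nat_def)
qed

lemma cardB_meas[measurable]: "cardB p \<in> borel_measurable borel"
proof (induction p)
  case 0
  have "(\<lambda>t::real. if 0 \<le> t \<and> t < 1 then 1 else (0::real)) \<in> borel_measurable borel" by measurable
  then show ?case by (simp add: fun_eq_iff)
next
  case (Suc q)
  note [measurable] = Suc.IH
  have "(\<lambda>t. t / real (Suc q) * cardB q t + (real (Suc q) + 1 - t) / real (Suc q) * cardB q (t - 1)) \<in> borel_measurable borel"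
    by measurable
  then show ?case by (simp only: cardB.simps[abs_def])
qed

lemma cardB_bdd: "\<exists>B. \<forall>t. \<bar>cardB p t\<bar> \<le> B"
proof (induction p)
  case 0
  show ?case by (rule exI[of _ 1]) auto
next
  case (Suc q)
  then obtain B where B: "\<And>t. \<bar>cardB q t\<bar> \<le> B" by blast
  have B0: "B \<ge> 0" using B[of 0] by linarith
  have "\<bar>cardB (Suc q) t\<bar> \<le> 4 * B" for t
  proof (cases "t < 0 \<or> real (Suc q) + 1 \<le> t")
    case True
    then show ?thesis using cardB_out[OF True] B0 by simp
  next
    case False
    then have t: "0 \<le> t" "t \<le> real q + 2" by auto
    have c1: "\<bar>t / real (Suc q)\<bar> \<le> 2" using t by (simp add: divide_le_eq)
    have c2: "\<bar>(real (Suc q) + 1 - t) / real (Suc q)\<bar> \<le> 2" using t by (simp add: divide_le_eq)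
    have "\<bar>cardB (Suc q) t\<bar> = \<bar>t / real (Suc q) * cardB q t + (real (Suc q) + 1 - t) / real (Suc q) * cardB q (t - 1)\<bar>"
      by (simp only: cardB.simps)
    also have "\<dots> \<le> \<bar>t / real (Suc q) * cardB q t\<bar> + \<bar>(real (Suc q) + 1 - t) / real (Suc q) * cardB q (t - 1)\<bar>"
      by (rule abs_triangle_ineq)
    also have "\<dots> = \<bar>t / real (Suc q)\<bar> * \<bar>cardB q t\<bar> + \<bar>(real (Suc q) + 1 - t) / real (Suc q)\<bar> * \<bar>cardB q (t - 1)\<bar>"
      by (simp only: abs_mult)
    also have "\<dots> \<le> 2 * B + 2 * B"
      by (intro add_mono mult_mono c1 c2 B) auto
    finally show ?thesis by simp
  qed
  then show ?case by blast
qed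

lemma integrable_cs:
  fixes f :: "real \<Rightarrow> real"
  assumes [measurable]: "f \<in> borel_measurable borel" and "\<And>t. \<bar>f t\<bar> \<le> B" and "\<And>t. t \<notin> {a..b} \<Longrightarrow> f t = 0"
  shows "integrable lborel f"
proof -
  have i1: "integrable lborel (\<lambda>x. B * indicator {a..b} x :: real)"
    by (intro integrable_mult_right integrable_real_indicator) (auto simp: emeasure_lborel_Icc_eq)
  have i2: "f \<in> borel_measurable lborel" by simp
  have B0: "0 \<le> B" using assms(2)[of a] by linarith
  have i3: "AE x in lborel. norm (f x) \<le> norm (B * indicator {a..b} x :: real)"
  proof (intro AE_I2)
    fix x show "norm (f x) \<le> norm (B * indicator {a..b} x :: real)"
      using assms(2)[of x] assms(3)[of x] B0 by (cases "x \<in> {a..b}") auto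
  qed
  show ?thesis by (rule Bochner_Integration.integrable_bound[OF i1 i2 i3])
qed

lemma lborel_eq_HK: fixes f :: "real \<Rightarrow> real"
  assumes "integrable lborel f" "(f has_integral I) UNIV" shows "integral\<^sup>L lborel f = I"
  by (rule has_integral_unique[OF has_integral_integral_lborel[OF assms(1)] assms(2)])


declare cardB.simps(2)[simp del]

lemma cardB_shift_deriv: assumes "t - c \<notin> \<int> \<or> p \<ge> 1"
  shows "((\<lambda>x. cardB (Suc p) (x - c)) has_real_derivative cardB p (t - c) - cardB p (t - c - 1)) (at t)"
proof -
  have h: "(cardB (Suc p) has_real_derivative cardB p (t - c) - cardB p (t - c - 1)) (at (t + - c))"
    using cardB_deriv[OF assms] by (simp only: diff_conv_add_uminus)
  have l: "(\<lambda>x. cardB (Suc p) (x + -c)) = (\<lambda>x. cardB (Suc p) (x - c))"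
    by (rule ext) (simp only: diff_conv_add_uminus)
  show ?thesis using DERIV_shift[THEN iffD1, OF h] unfolding l .
qed


lemma cardB_cont_Suc: "continuous_on S (cardB (Suc p))"
  by (rule continuous_on_subset[OF cardB_cont[of "Suc p"]]) auto

lemma window_HK: "(cardB a has_integral cardB (Suc a) s) {s-1..s}"
proof -
  define J where "J = nat \<lceil>s\<rceil> + 1"
  have Js: "s < real J" unfolding J_def by linarith
  define M where "M x = (\<Sum>j<J. cardB (Suc a) (x - real j))" for x
  have Ms: "M s - M (s-1) = cardB (Suc a) s"
  proof -
    have "M s - M (s-1) = (\<Sum>j<J. cardB (Suc a) (s - real j) - cardB (Suc a) (s - real (Suc j)))"
      unfolding M_def by (simp add: sum_subtractf algebra_simps)
    also have "\<dots> = cardB (Suc a) (s - real 0) - cardB (Suc a) (s - real J)"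
      by (rule sum_lessThan_telescope')
    also have "cardB (Suc a) (s - real J) = 0" using Js by (intro cardB_out) simp
    finally show ?thesis by simp
  qed
  define S where "S = real_of_int ` {\<lfloor>s\<rfloor> - 1 .. \<lfloor>s\<rfloor>}"
  have fS: "finite S" unfolding S_def by simp
  have der: "(M has_vector_derivative cardB a x) (at x)" if x: "x \<in> {s-1<..<s} - S" for x
  proof -
    have xZ: "x \<notin> \<int>"
    proof
      assume "x \<in> \<int>"
      then obtain k where k: "x = real_of_int k" by (auto elim: Ints_cases)
      have k1: "real_of_int k < s" "s - 1 < real_of_int k" using x k by auto
      have "k \<le> \<lfloor>s\<rfloor>" using k1 by (simp add: le_floor_iff)
      moreover have "\<lfloor>s\<rfloor> < k + 1" using k1 floor_less_iff[of s "k+1"] by simp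
      ultimately have "k \<in> {\<lfloor>s\<rfloor> - 1 .. \<lfloor>s\<rfloor>}" by simp
      then show False using x k unfolding S_def by auto
    qed
    have xj: "x - real j \<notin> \<int>" for j
    proof
      assume "x - real j \<in> \<int>"
      then have "x - real j + real j \<in> \<int>" by (intro Ints_add) auto
      then show False using xZ by simp
    qed
    have "(M has_real_derivative (\<Sum>j<J. cardB a (x - real j) - cardB a (x - real j - 1))) (at x)"
      unfolding M_def[abs_def]
      by (intro DERIV_sum cardB_shift_deriv) (use xj in auto)
    moreover have "(\<Sum>j<J. cardB a (x - real j) - cardB a (x - real j - 1)) = cardB a x"
    proof -
      have "(\<Sum>j<J. cardB a (x - real j) - cardB a (x - real j - 1))
          = (\<Sum>j<J. cardB a (x - real j) - cardB a (x - real (Suc j)))"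
        by (simp add: algebra_simps)
      also have "\<dots> = cardB a (x - real 0) - cardB a (x - real J)"
        by (rule sum_lessThan_telescope')
      also have "cardB a (x - real J) = 0" using Js x by (intro cardB_out) simp
      finally show ?thesis by simp
    qed
    ultimately show ?thesis by (simp add: has_real_derivative_iff_has_vector_derivative)
  qed
  have cont: "continuous_on {s-1..s} M"
    unfolding M_def
  proof (intro continuous_on_sum)
    fix j show "continuous_on {s-1..s} (\<lambda>x. cardB (Suc a) (x - real j))"
      by (rule continuous_on_compose2[OF cardB_cont_Suc[of UNIV a]]) (auto intro!: continuous_intros)
  qed
  have "(cardB a has_integral (M s - M (s-1))) {s-1..s}"
    by (rule fundamental_theorem_of_calculus_interior_strong[OF fS _ der cont]) auto
  then show ?thesis unfolding Ms .
qed

lemma window: "integral\<^sup>L lborel (\<lambda>u. cardB a u * cardB 0 (s - u)) = cardB (Suc a) s"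
proof (rule lborel_eq_HK)
  obtain B where B: "\<And>t. \<bar>cardB a t\<bar> \<le> B" using cardB_bdd by blast
  show "integrable lborel (\<lambda>u. cardB a u * cardB 0 (s - u))"
  proof (rule integrable_cs[where B=B and a="s-1" and b=s])
    show "(\<lambda>u. cardB a u * cardB 0 (s - u)) \<in> borel_measurable borel" by measurable
    show "\<bar>cardB a t * cardB 0 (s - t)\<bar> \<le> B" for t using B[of t] B[of 0] by auto
    show "t \<notin> {s - 1..s} \<Longrightarrow> cardB a t * cardB 0 (s - t) = 0" for t by auto
  qed
  have h: "((\<lambda>u. if u \<in> {s-1..s} then cardB a u else 0) has_integral cardB (Suc a) s) UNIV"
    using window_HK has_integral_restrict_UNIV by blast
  show "((\<lambda>u. cardB a u * cardB 0 (s - u)) has_integral cardB (Suc a) s) UNIV"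
    by (rule has_integral_spike_finite[where S="{s-1}", OF _ _ h]) (auto simp: indicator_def)
qed


declare cardB.simps(2)[simp del]

definition conv :: "nat \<Rightarrow> nat \<Rightarrow> real \<Rightarrow> real" where
  "conv a b s = (\<integral>u. cardB a u * cardB b (s - u) \<partial>lborel)"

lemma conv_comm: "conv a b s = conv b a s"
proof -
  have "conv a b s = \<bar>-1\<bar> *\<^sub>R (\<integral>x. cardB a (s + -1 * x) * cardB b (s - (s + -1 * x)) \<partial>lborel)"
    unfolding conv_def by (rule lborel_integral_real_affine) simp
  also have "\<dots> = conv b a s"
    unfolding conv_def by (simp add: mult.commute)
  finally show ?thesis .
qed

lemma integrable_mult_cs:
  fixes f g :: "real \<Rightarrow> real" and Bf Bg a b :: real
  assumes [measurable]: "f \<in> borel_measurable borel" "g \<in> borel_measurable borel"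
    and "\<And>t. \<bar>f t\<bar> \<le> Bf" "\<And>t. \<bar>g t\<bar> \<le> Bg" "\<And>t. t \<notin> {a..b} \<Longrightarrow> f t = 0"
  shows "integrable lborel (\<lambda>t. f t * g t)"
proof (rule integrable_cs[where B="Bf*Bg" and a=a and b=b])
  show "(\<lambda>t. f t * g t) \<in> borel_measurable borel" by measurable
  show "\<bar>f t * g t\<bar> \<le> Bf * Bg" for t
    unfolding abs_mult by (rule mult_mono) (use assms(3,4)[of t] in auto)
  show "t \<notin> {a..b} \<Longrightarrow> f t * g t = 0" for t using assms(5) by simp
qed

lemma cardB_bdd': obtains B where "\<And>t. \<bar>cardB p t\<bar> \<le> B"
  using cardB_bdd by blast

lemma cardB_zero_out: "t \<notin> {0..real p + 1} \<Longrightarrow> cardB p t = 0"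
  by (rule cardB_out) auto

lemma integrable_cardB2: "integrable lborel (\<lambda>t. cardB a (t - c) * cardB b (d - t))"
proof -
  obtain B1 where B1: "\<And>t. \<bar>cardB a t\<bar> \<le> B1" using cardB_bdd by blast
  obtain B2 where B2: "\<And>t. \<bar>cardB b t\<bar> \<le> B2" using cardB_bdd by blast
  show ?thesis
    by (rule integrable_mult_cs[where Bf=B1 and Bg=B2 and a=c and b="c + real a + 1"])
       (use B1 B2 in \<open>auto intro!: cardB_out\<close>)
qed

lemma integrable_F2:
  "integrable (lborel \<Otimes>\<^sub>M lborel) (\<lambda>(u::real, w::real). cardB a u * (cardB b w * cardB 0 (s - u - w)))"
proof -
  obtain B1 where B1: "\<And>t. \<bar>cardB a t\<bar> \<le> B1" using cardB_bdd by blast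
  obtain B2 where B2: "\<And>t. \<bar>cardB b t\<bar> \<le> B2" using cardB_bdd by blast
  obtain B0 where B0: "\<And>t. \<bar>cardB 0 t\<bar> \<le> B0" using cardB_bdd by blast
  have B1p: "0 \<le> B1" using B1[of 0] by linarith
  have B2p: "0 \<le> B2" using B2[of 0] by linarith
  let ?box = "cbox ((0::real),(0::real)) (real a + 1, real b + 1)"
  have i1: "integrable (lborel \<Otimes>\<^sub>M lborel) (\<lambda>x. (B1 * B2 * B0) * indicator ?box x :: real)"
    unfolding lborel_prod
    using emeasure_lborel_cbox_finite[of "(0::real,0::real)" "(real a + 1, real b + 1)"]
    by (intro integrable_mult_right integrable_real_indicator) auto
  have i2: "(\<lambda>(u::real, w::real). cardB a u * (cardB b w * cardB 0 (s - u - w))) \<in> borel_measurable (lborel \<Otimes>\<^sub>M lborel)"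
    by measurable
  have i3: "AE x in (lborel \<Otimes>\<^sub>M lborel). norm ((\<lambda>(u::real, w::real). cardB a u * (cardB b w * cardB 0 (s - u - w))) x)
      \<le> norm ((B1 * B2 * B0) * indicator ?box x :: real)"
  proof (intro AE_I2)
    fix x :: "real \<times> real"
    obtain u w where x: "x = (u, w)" by (cases x)
    show "norm ((\<lambda>(u::real, w::real). cardB a u * (cardB b w * cardB 0 (s - u - w))) x)
      \<le> norm ((B1 * B2 * B0) * indicator ?box x :: real)"
    proof (cases "x \<in> ?box")
      case True
      have "\<bar>cardB a u * (cardB b w * cardB 0 (s - u - w))\<bar> \<le> B1 * (B2 * B0)"
        unfolding abs_mult
        by (intro mult_mono B1 B2 B0) (use B1p B2p in auto)
      then show ?thesis using True x by (auto simp: mult.assoc)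
    next
      case False
      then have "u \<notin> {0..real a + 1} \<or> w \<notin> {0..real b + 1}" using x by auto
      then have "cardB a u = 0 \<or> cardB b w = 0" using cardB_zero_out by blast
      then show ?thesis using False x by auto
    qed
  qed
  show ?thesis
    by (rule Bochner_Integration.integrable_bound[OF i1 i2 i3])
qed

lemma conv_eq: "conv a b s = cardB (a + b + 1) s"
proof (induction b arbitrary: a s)
  case 0
  show ?case unfolding conv_def using window[of a s] by simp
next
  case (Suc b)
  have "conv a (Suc b) s = (\<integral>u. (\<integral>w. cardB a u * (cardB b w * cardB 0 (s - u - w)) \<partial>lborel) \<partial>lborel)"
    unfolding conv_def
  proof (intro Bochner_Integration.integral_cong refl)
    fix u :: real
    have "cardB (Suc b) (s - u) = (\<integral>w. cardB b w * cardB 0 (s - u - w) \<partial>lborel)"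
      using window[of b "s - u"] by simp
    then show "cardB a u * cardB (Suc b) (s - u) = (\<integral>w. cardB a u * (cardB b w * cardB 0 (s - u - w)) \<partial>lborel)"
      by simp
  qed
  also have "\<dots> = (\<integral>w. (\<integral>u. cardB a u * (cardB b w * cardB 0 (s - u - w)) \<partial>lborel) \<partial>lborel)"
    using lborel_pair.Fubini_integral[OF integrable_F2[of a b s]] by simp
  also have "\<dots> = conv b (Suc a) s"
    unfolding conv_def
  proof (intro Bochner_Integration.integral_cong refl)
    fix w :: real
    have "(\<integral>u. cardB a u * cardB 0 (s - w - u) \<partial>lborel) = cardB (Suc a) (s - w)"
      using window[of a "s - w"] by simp
    moreover have "(\<lambda>u. cardB a u * (cardB b w * cardB 0 (s - u - w))) = (\<lambda>u. cardB b w * (cardB a u * cardB 0 (s - w - u)))"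
      by (rule ext) (simp add: algebra_simps)
    ultimately show "(\<integral>u. cardB a u * (cardB b w * cardB 0 (s - u - w)) \<partial>lborel) = cardB b w * cardB (Suc a) (s - w)"
      by simp
  qed
  also have "\<dots> = conv (Suc a) b s" by (rule conv_comm)
  also have "\<dots> = cardB (a + Suc b + 1) s" using Suc.IH[of "Suc a" s] by simp
  finally show ?case .
qed


lemma cardB_sym: "p \<ge> 1 \<Longrightarrow> cardB p (real p + 1 - t) = cardB p t"
proof (induction p arbitrary: t rule: nat_induct_at_least)
  case base
  show ?case unfolding cardB1 by (simp add: abs_minus_commute)
next
  case (Suc q)
  have a: "cardB q (real (Suc q) + 1 - t) = cardB q (t - 1)"
    using Suc.IH[of "t - 1"] by (simp add: algebra_simps)
  have b: "cardB q (real (Suc q) + 1 - t - 1) = cardB q t"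
    using Suc.IH[of t] by (simp add: algebra_simps)
  show ?case
    unfolding cardB.simps(2)[of q] a b
    by (simp add: algebra_simps)
qed

lemma Gq: "(\<integral>v. cardB q v * cardB q (v + s) \<partial>lborel) = cardB (2*q+1) (real q + 1 - s)"
proof -
  have "(\<integral>v. cardB q v * cardB q (v + s) \<partial>lborel) = conv q q (real q + 1 - s)"
    unfolding conv_def
  proof (rule integral_cong_AE)
    show "(\<lambda>v. cardB q v * cardB q (v + s)) \<in> borel_measurable lborel" by measurable
    show "(\<lambda>v. cardB q v * cardB q (real q + 1 - s - v)) \<in> borel_measurable lborel" by measurable
    have "AE v in lborel. v \<noteq> - s" by (rule AE_lborel_singleton)
    moreover have "AE v in lborel. v \<noteq> 1 - s" by (rule AE_lborel_singleton)
    ultimately show "AE v in lborel. cardB q v * cardB q (v + s) = cardB q v * cardB q (real q + 1 - s - v)"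
    proof eventually_elim
      case (elim v)
      show ?case
      proof (cases "q \<ge> 1")
        case True
        then show ?thesis using cardB_sym[OF True, of "v + s"] by (simp add: algebra_simps)
      next
        case False
        then have q0: "q = 0" by simp
        have "v + s \<noteq> 0" "v + s \<noteq> 1" using elim by auto
        then show ?thesis unfolding q0 by auto
      qed
    qed
  qed
  also have "\<dots> = cardB (2*q+1) (real q + 1 - s)" by (simp add: conv_eq mult_2)
  finally show ?thesis .
qed


fun dN :: "nat \<Rightarrow> nat \<Rightarrow> real \<Rightarrow> real" where
  "dN p 0 t = cardB p t"
| "dN 0 (Suc r) t = 0"
| "dN (Suc p) (Suc r) t = dN p r t - dN p r (t - 1)"

lemma dN_meas[measurable]: "dN p r \<in> borel_measurable borel"
proof (induction r arbitrary: p)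
  case 0
  show ?case by (simp add: fun_eq_iff)
next
  case (Suc r)
  show ?case
  proof (cases p)
    case 0 then show ?thesis by simp
  next
    case (Suc q)
    note [measurable] = Suc.IH[of q]
    have "(\<lambda>t. dN q r t - dN q r (t - 1)) \<in> borel_measurable borel" by measurable
    then show ?thesis using Suc by simp
  qed
qed

lemma dN_bdd: "\<exists>B. \<forall>t. \<bar>dN p r t\<bar> \<le> B"
proof (induction r arbitrary: p)
  case 0
  then show ?case using cardB_bdd[of p] by simp
next
  case (Suc r)
  show ?case
  proof (cases p)
    case 0 then show ?thesis by (auto intro: exI[of _ 0])
  next
    case (Suc q)
    obtain B where B: "\<And>t. \<bar>dN q r t\<bar> \<le> B" using Suc.IH[of q] by blast
    have "\<bar>dN (Suc q) (Suc r) t\<bar> \<le> 2 * B" for t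
      using B[of t] B[of "t - 1"] by simp
    then show ?thesis using Suc by blast
  qed
qed

lemma dN_out: "t \<notin> {0..real p + 1} \<Longrightarrow> dN p r t = 0"
proof (induction r arbitrary: p t)
  case 0
  then show ?case by (simp add: cardB_zero_out)
next
  case (Suc r)
  show ?case
  proof (cases p)
    case 0 then show ?thesis by simp
  next
    case (Suc q)
    have "t \<notin> {0..real q + 1}" "t - 1 \<notin> {0..real q + 1}" using Suc.prems Suc by auto
    then show ?thesis using Suc.IH Suc by simp
  qed
qed

lemma integrable_dN2: "integrable lborel (\<lambda>u. dN p r (u - c) * dN p r (u + d))"
proof -
  obtain B where B: "\<And>t. \<bar>dN p r t\<bar> \<le> B" using dN_bdd by blast
  show ?thesis
    by (rule integrable_mult_cs[where Bf=B and Bg=B and a=c and b="c + real p + 1"])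
       (use B in \<open>auto intro!: dN_out\<close>)
qed

definition Icorr :: "nat \<Rightarrow> nat \<Rightarrow> real \<Rightarrow> real" where
  "Icorr p r s = (\<integral>u. dN p r u * dN p r (u + s) \<partial>lborel)"

lemma shift_int: "(\<integral>u. f (u - 1) \<partial>lborel) = (\<integral>u. f u \<partial>lborel)" for f :: "real \<Rightarrow> real"
  using lborel_integral_real_affine[of 1 "\<lambda>u. f (u - 1)" 1] by simp

lemma Icorr_rec: "Icorr (Suc p) (Suc r) s = 2 * Icorr p r s - Icorr p r (s - 1) - Icorr p r (s + 1)"
proof -
  let ?f = "dN p r"
  have e: "dN (Suc p) (Suc r) u * dN (Suc p) (Suc r) (u + s) =
      ?f u * ?f (u + s) - ?f u * ?f (u + (s - 1))
      - ?f (u - 1) * ?f (u + s) + ?f (u - 1) * ?f (u + (s - 1))" for u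
    by (simp add: algebra_simps)
  have i0: "integrable lborel (\<lambda>u. dN p r u * dN p r (u + d))" for d
    using integrable_dN2[of p r 0 d] by simp
  have i1: "integrable lborel (\<lambda>u. dN p r (u - 1) * dN p r (u + d))" for d
    using integrable_dN2[of p r 1 d] by simp
  have "Icorr (Suc p) (Suc r) s =
      (\<integral>u. ?f u * ?f (u + s) \<partial>lborel) - (\<integral>u. ?f u * ?f (u + (s - 1)) \<partial>lborel)
      - (\<integral>u. ?f (u - 1) * ?f (u + s) \<partial>lborel) + (\<integral>u. ?f (u - 1) * ?f (u + (s - 1)) \<partial>lborel)"
    unfolding Icorr_def e
    by (simp add: Bochner_Integration.integral_add Bochner_Integration.integral_diff i0 i1)
  also have "(\<integral>u. ?f (u - 1) * ?f (u + s) \<partial>lborel) = (\<integral>u. ?f u * ?f (u + (s + 1)) \<partial>lborel)"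
    using shift_int[of "\<lambda>u. ?f u * ?f (u + (s + 1))"] by (simp add: algebra_simps)
  also have "(\<integral>u. ?f (u - 1) * ?f (u + (s - 1)) \<partial>lborel) = (\<integral>u. ?f u * ?f (u + s) \<partial>lborel)"
    using shift_int[of "\<lambda>u. ?f u * ?f (u + s)"] by (simp add: algebra_simps)
  finally show ?thesis unfolding Icorr_def by simp
qed

lemma Icorr_eq: "r \<le> p \<Longrightarrow> Icorr p r s = (-1)^r * dN (2*p+1) (2*r) (real p + 1 - s)"
proof (induction r arbitrary: p s)
  case 0
  show ?case unfolding Icorr_def using Gq[of p s] by simp
next
  case (Suc r)
  then obtain q where p: "p = Suc q" by (cases p) auto
  have r: "r \<le> q" using Suc.prems p by simp
  let ?g = "dN (2*q+1) (2*r)"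
  have e1: "2 * p + 1 = Suc (Suc (2 * q + 1))" "2 * Suc r = Suc (Suc (2 * r))" using p by simp_all
  have "Icorr p (Suc r) s = 2 * Icorr q r s - Icorr q r (s - 1) - Icorr q r (s + 1)"
    unfolding p by (rule Icorr_rec)
  also have "\<dots> = (-1)^r * (2 * ?g (real q + 1 - s) - ?g (real q + 1 - (s - 1)) - ?g (real q + 1 - (s + 1)))"
    using Suc.IH[OF r] by (simp add: algebra_simps)
  also have "\<dots> = (-1)^(Suc r) * dN (2*p+1) (2*Suc r) (real p + 1 - s)"
    unfolding e1 using p by (simp add: algebra_simps)
  finally show ?case .
qed


lemma ae_notInt: "AE x in lborel. (x::real) \<notin> \<int>"
  by (rule AE_not_in[OF countable_imp_null_set_lborel[OF countable_int]])

lemma Ints_minus_iff: "a \<in> \<int> \<Longrightarrow> (x - a \<in> \<int>) = (x \<in> (\<int>::real set))"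
  by (metis Ints_add Ints_diff diff_add_cancel)

lemma dN_fun: "dN (Suc q) (Suc r) = (\<lambda>t. dN q r t - dN q r (t - 1))"
  by (rule ext) simp

lemma dN_deriv: "r < p \<Longrightarrow> (Suc r < p \<or> t \<notin> \<int>) \<Longrightarrow> (dN p r has_real_derivative dN p (Suc r) t) (at t)"
proof (induction r arbitrary: p t)
  case 0
  then obtain q where p: "p = Suc q" by (cases p) auto
  have "t \<notin> \<int> \<or> q \<ge> 1" using 0 p by auto
  moreover have "dN (Suc q) 0 = cardB (Suc q)" by (rule ext) simp
  moreover have "dN (Suc q) (Suc 0) t = cardB q t - cardB q (t - 1)" by simp
  ultimately show ?case unfolding p using cardB_deriv by metis
next
  case (Suc r)
  then obtain q where p: "p = Suc q" by (cases p) auto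
  have h: "r < q" "Suc r < q \<or> t \<notin> \<int>" using Suc.prems p by auto
  have h1: "Suc r < q \<or> t - 1 \<notin> \<int>" using h(2) Ints_minus_iff[of 1 t] by auto
  have d1: "(dN q r has_real_derivative dN q (Suc r) t) (at t)" by (rule Suc.IH[OF h])
  have d2: "((\<lambda>x. dN q r (x - 1)) has_real_derivative dN q (Suc r) (t - 1)) (at t)"
  proof -
    have "(dN q r has_real_derivative dN q (Suc r) (t - 1)) (at (t + - 1))"
      using Suc.IH[OF h(1) h1] by simp
    from DERIV_shift[THEN iffD1, OF this] show ?thesis by simp
  qed
  show ?case unfolding p dN_fun
    using DERIV_diff[OF d1 d2] by simp
qed

lemma dN_sym: "r \<le> p \<Longrightarrow> (r < p \<or> t \<notin> \<int>) \<Longrightarrow> dN p r (real p + 1 - t) = (-1)^r * dN p r t"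
proof (induction r arbitrary: p t)
  case 0
  show ?case
  proof (cases "p \<ge> 1")
    case True
    then show ?thesis using cardB_sym[OF True] by simp
  next
    case False
    then have "p = 0" "t \<notin> \<int>" using 0 by auto
    then have "t \<noteq> 0" "t \<noteq> 1" by auto
    then show ?thesis using \<open>p = 0\<close> by auto
  qed
next
  case (Suc r)
  then obtain q where p: "p = Suc q" by (cases p) auto
  have h: "r \<le> q" "r < q \<or> t \<notin> \<int>" using Suc.prems p by auto
  have h1: "r < q \<or> t - 1 \<notin> \<int>" using h(2) Ints_minus_iff[of 1 t] by auto
  have a: "dN q r (real q + 1 - (t - 1)) = (-1)^r * dN q r (t - 1)" by (rule Suc.IH[OF h(1) h1])
  have b: "dN q r (real q + 1 - t) = (-1)^r * dN q r t" by (rule Suc.IH[OF h])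
  have "dN p (Suc r) (real p + 1 - t) = dN q r (real q + 1 - (t - 1)) - dN q r (real q + 1 - t)"
    unfolding p by (simp add: algebra_simps)
  also have "\<dots> = (-1)^(Suc r) * dN p (Suc r) t" unfolding a b p by (simp add: algebra_simps)
  finally show ?case .
qed

lemma dN_le0: "r < p \<Longrightarrow> t \<le> 0 \<Longrightarrow> dN p r t = 0"
proof (induction r arbitrary: p t)
  case 0
  then obtain q where p: "p = Suc q" by (cases p) auto
  show ?case
  proof (cases "t = 0")
    case True then show ?thesis using p cardB_Suc0 by simp
  next
    case False then show ?thesis using 0 by (simp add: cardB_out)
  qed
next
  case (Suc r)
  then obtain q where p: "p = Suc q" by (cases p) auto
  then show ?case using Suc by simp
qed

lemma funpow_deriv_dN: "r < P \<Longrightarrow> (deriv ^^ r) (cardB P) = dN P r"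
proof (induction r)
  case 0 show ?case by (simp add: fun_eq_iff)
next
  case (Suc r)
  have "(deriv ^^ Suc r) (cardB P) = deriv (dN P r)" using Suc by simp
  also have "\<dots> = dN P (Suc r)"
    by (rule ext, rule DERIV_imp_deriv, rule dN_deriv) (use Suc.prems in auto)
  finally show ?case .
qed

lemma Icorr_neg: "Icorr p r (- s) = Icorr p r s"
proof -
  have "Icorr p r (- s) = \<bar>1\<bar> *\<^sub>R (\<integral>x. dN p r (s + 1 * x) * dN p r (s + 1 * x + - s) \<partial>lborel)"
    unfolding Icorr_def by (rule lborel_integral_real_affine) simp
  also have "\<dots> = Icorr p r s" unfolding Icorr_def by (simp add: mult.commute add.commute)
  finally show ?thesis .
qed


definition ps :: "nat \<Rightarrow> nat \<Rightarrow> real \<Rightarrow> real \<Rightarrow> real" where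
  "ps p r a u = dN p r (u - a)"

definition Wi :: "nat \<Rightarrow> nat \<Rightarrow> real set \<Rightarrow> real \<Rightarrow> real \<Rightarrow> real" where
  "Wi p r S a b = (\<integral>u. indicator S u * (ps p r a u * ps p r b u) \<partial>lborel)"

lemma ps_meas[measurable]: "ps p r a \<in> borel_measurable borel"
  unfolding ps_def[abs_def] by measurable

lemma integrable_W: assumes [measurable]: "S \<in> sets borel"
  shows "integrable lborel (\<lambda>u. indicator S u * (ps p r a u * ps p r b u))"
proof -
  obtain B where B: "\<And>t. \<bar>dN p r t\<bar> \<le> B" using dN_bdd by blast
  have B0: "0 \<le> B" using B[of 0] by linarith
  have "integrable lborel (\<lambda>u. (indicator S u * ps p r a u) * ps p r b u)"
  proof (rule integrable_mult_cs[where Bf=B and Bg=B and a=a and b="a + real p + 1"])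
    show "(\<lambda>u. indicator S u * ps p r a u) \<in> borel_measurable borel" by measurable
    show "\<bar>indicator S t * ps p r a t\<bar> \<le> B" for t
      using B[of "t - a"] B0 by (auto simp: ps_def indicator_def)
    show "\<bar>ps p r b t\<bar> \<le> B" for t using B[of "t - b"] by (simp add: ps_def)
    show "t \<notin> {a..a + real p + 1} \<Longrightarrow> indicator S t * ps p r a t = 0" for t
      by (auto simp: ps_def intro!: dN_out)
  qed simp
  then show ?thesis by (simp add: mult.assoc)
qed

lemma W_UNIV: "Wi p r UNIV a b = Icorr p r (a - b)"
proof -
  have "Wi p r UNIV a b = (\<integral>u. ps p r a u * ps p r b u \<partial>lborel)" unfolding Wi_def by simp
  also have "\<dots> = \<bar>1\<bar> *\<^sub>R (\<integral>x. ps p r a (a + 1 * x) * ps p r b (a + 1 * x) \<partial>lborel)"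
    by (rule lborel_integral_real_affine) simp
  also have "\<dots> = Icorr p r (a - b)" unfolding Icorr_def ps_def by (simp add: algebra_simps)
  finally show ?thesis .
qed

lemma W_split: assumes "0 \<le> c"
  shows "Wi p r UNIV a b = Wi p r {..<0} a b + Wi p r {0..c} a b + Wi p r {c<..} a b"
proof -
  have e: "indicator UNIV u * X = indicator {..<0} u * X + indicator {0..c} u * X + indicator {c<..} u * X"
    for u and X :: real
    using assms by (auto simp: indicator_def)
  have iA: "integrable lborel (\<lambda>u. indicator {..<0} u * (ps p r a u * ps p r b u))" by (rule integrable_W) simp
  have iB: "integrable lborel (\<lambda>u. indicator {0..c} u * (ps p r a u * ps p r b u))" by (rule integrable_W) simp
  have iC: "integrable lborel (\<lambda>u. indicator {c<..} u * (ps p r a u * ps p r b u))" by (rule integrable_W) simp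
  show ?thesis unfolding Wi_def e
    using Bochner_Integration.integral_add[OF Bochner_Integration.integrable_add[OF iA iB] iC]
      Bochner_Integration.integral_add[OF iA iB] by (simp only:)
qed

lemma AE_pts: "AE u in lborel. u \<noteq> (c::real) \<and> u \<noteq> d \<and> u \<notin> \<int>"
  using AE_lborel_singleton[of c] AE_lborel_singleton[of d] ae_notInt by eventually_elim auto

lemma W_refl0: assumes "a \<in> \<int>" "b \<in> \<int>" "r \<le> p"
  shows "Wi p r {..<0} a b = Wi p r {0<..} (- a - (real p + 1)) (- b - (real p + 1))"
proof -
  have "Wi p r {..<0} a b = \<bar>-1\<bar> *\<^sub>R (\<integral>x. indicator {..<0} (0 + -1 * x) * (ps p r a (0 + -1 * x) * ps p r b (0 + -1 * x)) \<partial>lborel)"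
    unfolding Wi_def by (rule lborel_integral_real_affine) simp
  also have "\<dots> = Wi p r {0<..} (- a - (real p + 1)) (- b - (real p + 1))"
    unfolding Wi_def
  proof (simp, rule integral_cong_AE)
    show "AE x in lborel. indicator {..<0} (- x) * (ps p r a (- x) * ps p r b (- x)) =
       indicator {0<..} x * (ps p r (- a - (real p + 1)) x * ps p r (- b - (real p + 1)) x)"
      using ae_notInt
    proof eventually_elim
      case (elim x)
      have ia: "- a - (real p + 1) \<in> \<int>" using assms(1) by (intro Ints_diff Ints_minus) auto
      have ib: "- b - (real p + 1) \<in> \<int>" using assms(2) by (intro Ints_diff Ints_minus) auto
      have xa: "r < p \<or> x - (- a - (real p + 1)) \<notin> \<int>"
        using elim Ints_minus_iff[OF ia, of x] by simp
      have xb: "r < p \<or> x - (- b - (real p + 1)) \<notin> \<int>"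
        using elim Ints_minus_iff[OF ib, of x] by simp
      have sa: "dN p r (real p + 1 - (x - (- a - (real p + 1)))) = (-1)^r * dN p r (x - (- a - (real p + 1)))"
        by (rule dN_sym[OF assms(3) xa])
      have sb: "dN p r (real p + 1 - (x - (- b - (real p + 1)))) = (-1)^r * dN p r (x - (- b - (real p + 1)))"
        by (rule dN_sym[OF assms(3) xb])
      have arga: "real p + 1 - (x - (- a - (real p + 1))) = - x - a" by simp
      have argb: "real p + 1 - (x - (- b - (real p + 1))) = - x - b" by simp
      have ea: "ps p r a (- x) = (-1)^r * ps p r (- a - (real p + 1)) x"
        unfolding ps_def using sa unfolding arga .
      have eb: "ps p r b (- x) = (-1)^r * ps p r (- b - (real p + 1)) x"
        unfolding ps_def using sb unfolding argb .
      have "((-1::real)^r) * (-1)^r = 1" by (simp add: power_mult_distrib[symmetric])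
      have ind: "indicator {..<0} (- x) = (indicator {0<..} x :: real)" by (simp add: indicator_def)
      have ac: "(-1::real)^r * A * ((-1)^r * B) = ((-1)^r * (-1)^r) * (A * B)" for A B
        by (simp only: mult_ac)
      show ?case unfolding ea eb ind ac \<open>((-1::real)^r) * (-1)^r = 1\<close> by (simp only: mult_1)
    qed
  qed measurable
  finally show ?thesis .
qed

lemma W_refln: assumes "a \<in> \<int>" "b \<in> \<int>" "r \<le> p" "c \<in> \<int>"
  shows "Wi p r {c<..} a b = Wi p r {..<c} (2*c - a - (real p + 1)) (2*c - b - (real p + 1))"
proof -
  have "Wi p r {c<..} a b = \<bar>-1\<bar> *\<^sub>R (\<integral>x. indicator {c<..} (2*c + -1 * x) * (ps p r a (2*c + -1 * x) * ps p r b (2*c + -1 * x)) \<partial>lborel)"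
    unfolding Wi_def by (rule lborel_integral_real_affine) simp
  also have "\<dots> = Wi p r {..<c} (2*c - a - (real p + 1)) (2*c - b - (real p + 1))"
    unfolding Wi_def
  proof (simp, rule integral_cong_AE)
    show "AE x in lborel. indicator {c<..} (2*c - x) * (ps p r a (2*c - x) * ps p r b (2*c - x)) =
       indicator {..<c} x * (ps p r (2*c - a - (real p + 1)) x * ps p r (2*c - b - (real p + 1)) x)"
      using ae_notInt
    proof eventually_elim
      case (elim x)
      have ia: "2*c - a - (real p + 1) \<in> \<int>" using assms(1,4) by (intro Ints_diff Ints_mult) auto
      have ib: "2*c - b - (real p + 1) \<in> \<int>" using assms(2,4) by (intro Ints_diff Ints_mult) auto
      have xa: "r < p \<or> x - (2*c - a - (real p + 1)) \<notin> \<int>"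
        using elim Ints_minus_iff[OF ia, of x] by simp
      have xb: "r < p \<or> x - (2*c - b - (real p + 1)) \<notin> \<int>"
        using elim Ints_minus_iff[OF ib, of x] by simp
      have sa: "dN p r (real p + 1 - (x - (2*c - a - (real p + 1)))) = (-1)^r * dN p r (x - (2*c - a - (real p + 1)))"
        by (rule dN_sym[OF assms(3) xa])
      have sb: "dN p r (real p + 1 - (x - (2*c - b - (real p + 1)))) = (-1)^r * dN p r (x - (2*c - b - (real p + 1)))"
        by (rule dN_sym[OF assms(3) xb])
      have arga: "real p + 1 - (x - (2*c - a - (real p + 1))) = 2*c - x - a" by simp
      have argb: "real p + 1 - (x - (2*c - b - (real p + 1))) = 2*c - x - b" by simp
      have ea: "ps p r a (2*c - x) = (-1)^r * ps p r (2*c - a - (real p + 1)) x"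
        unfolding ps_def using sa unfolding arga .
      have eb: "ps p r b (2*c - x) = (-1)^r * ps p r (2*c - b - (real p + 1)) x"
        unfolding ps_def using sb unfolding argb .
      have sq: "((-1::real)^r) * (-1)^r = 1" by (simp add: power_mult_distrib[symmetric])
      have ind: "indicator {c<..} (2*c - x) = (indicator {..<c} x :: real)" by (simp add: indicator_def)
      have ac: "(-1::real)^r * A * ((-1)^r * B) = ((-1)^r * (-1)^r) * (A * B)" for A B
        by (simp only: mult_ac)
      show ?case unfolding ea eb ind ac sq by (simp only: mult_1)
    qed
  qed measurable
  finally show ?thesis .
qed


lemma W_cong_pt:
  assumes [measurable]: "S \<in> sets borel" "S' \<in> sets borel"
    and "\<And>u. u \<noteq> d \<Longrightarrow> indicator S u * (ps p r a u * ps p r b u) = indicator S' u * (ps p r a' u * ps p r b' u)"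
  shows "Wi p r S a b = Wi p r S' a' b'"
  unfolding Wi_def
proof (rule integral_cong_AE)
  show "AE u in lborel. indicator S u * (ps p r a u * ps p r b u) = indicator S' u * (ps p r a' u * ps p r b' u)"
    using AE_lborel_singleton[of d] by eventually_elim (use assms(3) in auto)
qed measurable

lemma W_zero:
  assumes "\<And>u. u \<in> S \<Longrightarrow> ps p r a u * ps p r b u = 0"
  shows "Wi p r S a b = 0"
proof -
  have "(\<lambda>u. indicator S u * (ps p r a u * ps p r b u)) = (\<lambda>u. 0::real)"
    using assms by (auto simp: indicator_def fun_eq_iff)
  then show ?thesis unfolding Wi_def by simp
qed

lemma Wmain:
  fixes p r n i j m :: nat
  assumes pm: "p = 2*m" and m1: "1 \<le> m" and nm: "3*m \<le> n" and i: "1 \<le> i" "i \<le> n" and j: "1 \<le> j" "j \<le> n"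
    and rp: "r \<le> p"
  defines "ea \<equiv> \<lambda>k::nat. real k - 1 - real m"
    and "eb \<equiv> \<lambda>k::nat. - real k - real m"
    and "ec \<equiv> \<lambda>k::nat. 2 * real n - real k - real m"
  shows "(\<integral>u. indicator {0..real n} u *
        ((ps p r (ea i) u - ps p r (eb i) u - ps p r (ec i) u) * (ps p r (ea j) u - ps p r (eb j) u - ps p r (ec j) u)) \<partial>lborel)
      = Icorr p r (real i - real j) - Icorr p r (real i + real j - 1) - Icorr p r (2 * real n + 1 - real i - real j)"
proof -
  let ?W = "Wi p r"
  let ?N = "{0..real n}"
  have pr: "real p + 1 = 2 * real m + 1" using pm by simp
  have s2: "ps p r (eb k) u = 0" if "1 \<le> k" "u > real m" for k u
    unfolding ps_def eb_def by (rule dN_out) (use that pr in auto)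
  have s3: "ps p r (ec k) u = 0" if "k \<le> n" "u < real n - real m" for k u
    unfolding ps_def ec_def by (rule dN_out) (use that in auto)
  have mn: "real m < real n - real m" "real m \<le> real n" using nm m1 by linarith+
  have Zs: "ea k \<in> \<int>" "eb k \<in> \<int>" "ec k \<in> \<int>" for k
    unfolding ea_def eb_def ec_def by (intro Ints_diff Ints_minus Ints_mult; simp)+
  have nZ: "real n \<in> \<int>" by simp
  have r1: "- ea k - (real p + 1) = eb k" "- eb k - (real p + 1) = ea k" for k
    unfolding ea_def eb_def pr by simp_all
  have r2: "2 * real n - ea k - (real p + 1) = ec k" "2 * real n - ec k - (real p + 1) = ea k" for k
    unfolding ea_def ec_def pr by simp_all
  have bo: "{..<0::real} \<in> sets borel" "{0::real<..} \<in> sets borel" "{..<real n} \<in> sets borel"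
      "{real n<..} \<in> sets borel" "?N \<in> sets borel" by simp_all
  have iW: "integrable lborel (\<lambda>u. indicator ?N u * (ps p r a u * ps p r b u))" for a b
    by (rule integrable_W) simp
  have lhs: "(\<integral>u. indicator ?N u *
        ((ps p r (ea i) u - ps p r (eb i) u - ps p r (ec i) u) * (ps p r (ea j) u - ps p r (eb j) u - ps p r (ec j) u)) \<partial>lborel)
      = ?W ?N (ea i) (ea j) - ?W ?N (ea i) (eb j) - ?W ?N (ea i) (ec j)
        - ?W ?N (eb i) (ea j) + ?W ?N (eb i) (eb j) + ?W ?N (eb i) (ec j)
        - ?W ?N (ec i) (ea j) + ?W ?N (ec i) (eb j) + ?W ?N (ec i) (ec j)"
    unfolding Wi_def
    by (simp add: algebra_simps Bochner_Integration.integral_add Bochner_Integration.integral_diff iW)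
  have split: "?W UNIV a b = ?W {..<0} a b + ?W ?N a b + ?W {real n<..} a b" for a b
    by (rule W_split) simp
  have KAA: "?W UNIV (ea i) (ea j) = Icorr p r (real i - real j)"
    unfolding W_UNIV ea_def by simp
  have KAB: "?W UNIV (ea i) (eb j) = Icorr p r (real i + real j - 1)"
    unfolding W_UNIV ea_def eb_def by (simp add: algebra_simps)
  have KAC: "?W UNIV (ea i) (ec j) = Icorr p r (2 * real n + 1 - real i - real j)"
  proof -
    have "ea i - ec j = - (2 * real n + 1 - real i - real j)" unfolding ea_def ec_def by simp
    then show ?thesis unfolding W_UNIV by (simp only: Icorr_neg)
  qed
  have a1: "?W {..<0} (ea i) (ea j) = ?W ?N (eb i) (eb j)"
  proof -
    have "?W {..<0} (ea i) (ea j) = ?W {0<..} (eb i) (eb j)"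
      using W_refl0[OF Zs(1) Zs(1) rp] unfolding r1 .
    also have "\<dots> = ?W ?N (eb i) (eb j)"
    proof (rule W_cong_pt[where d=0])
      fix u :: real assume "u \<noteq> 0"
      show "indicator {0<..} u * (ps p r (eb i) u * ps p r (eb j) u) = indicator ?N u * (ps p r (eb i) u * ps p r (eb j) u)"
      proof (cases "u > real n")
        case True then have "ps p r (eb i) u = 0" using s2[OF i(1)] mn by simp
        then show ?thesis by simp
      next
        case False then show ?thesis using \<open>u \<noteq> 0\<close> by (auto simp: indicator_def)
      qed
    qed simp_all
    finally show ?thesis .
  qed
  have a2: "?W {real n<..} (ea i) (ea j) = ?W ?N (ec i) (ec j)"
  proof -
    have "?W {real n<..} (ea i) (ea j) = ?W {..<real n} (ec i) (ec j)"
      using W_refln[OF Zs(1) Zs(1) rp nZ] unfolding r2 .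
    also have "\<dots> = ?W ?N (ec i) (ec j)"
    proof (rule W_cong_pt[where d="real n"])
      fix u :: real assume "u \<noteq> real n"
      show "indicator {..<real n} u * (ps p r (ec i) u * ps p r (ec j) u) = indicator ?N u * (ps p r (ec i) u * ps p r (ec j) u)"
      proof (cases "u < 0")
        case True then have "ps p r (ec i) u = 0" using s3[OF i(2)] mn by simp
        then show ?thesis by simp
      next
        case False then show ?thesis using \<open>u \<noteq> real n\<close> by (auto simp: indicator_def)
      qed
    qed simp_all
    finally show ?thesis .
  qed
  have b1: "?W {..<0} (ea i) (eb j) = ?W ?N (eb i) (ea j)"
  proof -
    have "?W {..<0} (ea i) (eb j) = ?W {0<..} (eb i) (ea j)"
      using W_refl0[OF Zs(1) Zs(2) rp] unfolding r1 .
    also have "\<dots> = ?W ?N (eb i) (ea j)"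
    proof (rule W_cong_pt[where d=0])
      fix u :: real assume "u \<noteq> 0"
      show "indicator {0<..} u * (ps p r (eb i) u * ps p r (ea j) u) = indicator ?N u * (ps p r (eb i) u * ps p r (ea j) u)"
      proof (cases "u > real n")
        case True then have "ps p r (eb i) u = 0" using s2[OF i(1)] mn by simp
        then show ?thesis by simp
      next
        case False then show ?thesis using \<open>u \<noteq> 0\<close> by (auto simp: indicator_def)
      qed
    qed simp_all
    finally show ?thesis .
  qed
  have b2: "?W {real n<..} (ea i) (eb j) = 0"
    by (rule W_zero) (use s2[OF j(1)] mn in auto)
  have c1: "?W {..<0} (ea i) (ec j) = 0"
    by (rule W_zero) (use s3[OF j(2)] mn in auto)
  have c2: "?W {real n<..} (ea i) (ec j) = ?W ?N (ec i) (ea j)"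
  proof -
    have "?W {real n<..} (ea i) (ec j) = ?W {..<real n} (ec i) (ea j)"
      using W_refln[OF Zs(1) Zs(3) rp nZ] unfolding r2 .
    also have "\<dots> = ?W ?N (ec i) (ea j)"
    proof (rule W_cong_pt[where d="real n"])
      fix u :: real assume "u \<noteq> real n"
      show "indicator {..<real n} u * (ps p r (ec i) u * ps p r (ea j) u) = indicator ?N u * (ps p r (ec i) u * ps p r (ea j) u)"
      proof (cases "u < 0")
        case True then have "ps p r (ec i) u = 0" using s3[OF i(2)] mn by simp
        then show ?thesis by simp
      next
        case False then show ?thesis using \<open>u \<noteq> real n\<close> by (auto simp: indicator_def)
      qed
    qed simp_all
    finally show ?thesis .
  qed
  have z1: "?W ?N (eb i) (ec j) = 0"
  proof (rule W_zero)
    fix u assume "u \<in> ?N"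
    show "ps p r (eb i) u * ps p r (ec j) u = 0"
    proof (cases "u > real m")
      case True then show ?thesis using s2[OF i(1)] by simp
    next
      case False then show ?thesis using s3[OF j(2)] mn by simp
    qed
  qed
  have z2: "?W ?N (ec i) (eb j) = 0"
  proof (rule W_zero)
    fix u assume "u \<in> ?N"
    show "ps p r (ec i) u * ps p r (eb j) u = 0"
    proof (cases "u > real m")
      case True then show ?thesis using s2[OF j(1)] by simp
    next
      case False then show ?thesis using s3[OF i(2)] mn by simp
    qed
  qed
  show ?thesis
    unfolding lhs KAA[symmetric] KAB[symmetric] KAC[symmetric] split a1 a2 b1 b2 c1 c2 z1 z2
    by simp
qed


declare cardB.simps(2)[simp del]

lemma redB_local:
  fixes p n i m :: nat and x :: real
  assumes pm: "p = 2*m" and m1: "1 \<le> m" and nm: "3*m \<le> n" and i: "1 \<le> i" "i \<le> n"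
    and x: "- 1/2 < real n * x" "real n * x < real n + 1/2"
  shows "redB p n i x = cardB p (real n * x - (real i - 1 - real m))
      - cardB p (real n * x - (- real i - real m)) - cardB p (real n * x - (2 * real n - real i - real m))"
proof -
  define f where "f k = shiftB p n (real i - 1/2 + 2 * real_of_int k * real n) x
    - shiftB p n (- (real i - 1/2) + 2 * real_of_int k * real n) x" for k :: int
  have h: "(real p + 1) / 2 = real m + 1/2" using pm by simp
  have pos: "shiftB p n (real i - 1/2 + 2 * real_of_int k * real n) x =
      cardB p (real n * x - (real i - 1 - real m) - 2 * real_of_int k * real n)" for k
    unfolding shiftB_def h by (simp add: algebra_simps)
  have neg: "shiftB p n (- (real i - 1/2) + 2 * real_of_int k * real n) x =
      cardB p (real n * x - (- real i - real m) - 2 * real_of_int k * real n)" for k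
    unfolding shiftB_def h by (simp add: algebra_simps)
  have n1: "real n \<ge> 3 * real m" "real m \<ge> 1" using nm m1 by linarith+
  have ri: "1 \<le> real i" "real i \<le> real n" using i by auto
  have rp: "real p = 2 * real m" using pm by simp
  have pos0: "shiftB p n (real i - 1/2 + 2 * real_of_int k * real n) x = 0" if "k \<noteq> 0" for k
  proof (cases "k \<ge> 1")
    case True
    then have "real_of_int k \<ge> 1" by simp
    then have "2 * real_of_int k * real n \<ge> 2 * real n" using n1 by simp
    then show ?thesis unfolding pos by (intro cardB_out disjI1) (use x n1 ri in linarith)
  next
    case False
    then have "real_of_int k \<le> -1" using that by simp
    then have "real_of_int k * real n \<le> (-1) * real n" by (intro mult_right_mono) auto
    then have "2 * real_of_int k * real n \<le> - 2 * real n" by simp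
    then show ?thesis unfolding pos by (intro cardB_out disjI2) (use x n1 ri rp in linarith)
  qed
  have neg0: "shiftB p n (- (real i - 1/2) + 2 * real_of_int k * real n) x = 0" if "k \<noteq> 0" "k \<noteq> 1" for k
  proof (cases "k \<ge> 2")
    case True
    then have "real_of_int k \<ge> 2" by simp
    then have "2 * real_of_int k * real n \<ge> 4 * real n" using n1 by simp
    then show ?thesis unfolding neg by (intro cardB_out disjI1) (use x n1 ri in linarith)
  next
    case False
    then have "real_of_int k \<le> -1" using that by simp
    then have "real_of_int k * real n \<le> (-1) * real n" by (intro mult_right_mono) auto
    then have "2 * real_of_int k * real n \<le> - 2 * real n" by simp
    then show ?thesis unfolding neg by (intro cardB_out disjI2) (use x n1 ri rp in linarith)
  qed
  have pos1: "cardB p (real n * x - (real i - 1 - real m) - 2 * real n) = 0"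
    by (intro cardB_out disjI1) (use x n1 ri in linarith)
  have fz: "f k = 0" if "k \<notin> {0,1}" for k
  proof -
    have k: "k \<noteq> 0" "k \<noteq> 1" using that by auto
    show ?thesis unfolding f_def pos0[OF k(1)] neg0[OF k] by simp
  qed
  have arg: "real n * x - (- real i - real m) - 2 * real n = real n * x - (2 * real n - real i - real m)" by simp
  have "redB p n i x = infsum f UNIV" unfolding redB_def f_def ..
  also have "\<dots> = infsum f {0, 1}"
    by (rule infsum_cong_neutral) (use fz in auto)
  also have "\<dots> = f 0 + f 1" by simp
  also have "\<dots> = cardB p (real n * x - (real i - 1 - real m))
      - cardB p (real n * x - (- real i - real m)) - cardB p (real n * x - (2 * real n - real i - real m))"
    using arg unfolding f_def pos neg
    by (simp only: of_int_0 of_int_1 mult_zero_right mult_zero_left mult_1_right diff_zero pos1 arg)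
  finally show ?thesis .
qed


definition Hf :: "nat \<Rightarrow> nat \<Rightarrow> nat \<Rightarrow> real \<Rightarrow> real \<Rightarrow> real \<Rightarrow> real \<Rightarrow> real" where
  "Hf p r n a b c x = real n ^ r * (dN p r (real n * x - a) - dN p r (real n * x - b) - dN p r (real n * x - c))"

lemma dN_chain:
  assumes "r < p" "Suc r < p \<or> real n * x \<notin> \<int>" "a \<in> \<int>"
  shows "((\<lambda>x. dN p r (real n * x - a)) has_real_derivative dN p (Suc r) (real n * x - a) * real n) (at x)"
proof -
  have "Suc r < p \<or> real n * x - a \<notin> \<int>" using assms(2) Ints_minus_iff[OF assms(3)] by auto
  from dN_deriv[OF assms(1) this] have d: "(dN p r has_real_derivative dN p (Suc r) (real n * x - a)) (at (real n * x - a))" .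
  have g: "((\<lambda>x. real n * x - a) has_real_derivative real n) (at x)"
    by (auto intro!: derivative_eq_intros)
  show ?thesis by (rule DERIV_chain2[OF d g])
qed

lemma Hf_deriv:
  assumes "r < p" "Suc r < p \<or> real n * x \<notin> \<int>" "a \<in> \<int>" "b \<in> \<int>" "c \<in> \<int>"
  shows "(Hf p r n a b c has_real_derivative Hf p (Suc r) n a b c x) (at x)"
proof -
  have "((\<lambda>x. real n ^ r * (dN p r (real n * x - a) - dN p r (real n * x - b) - dN p r (real n * x - c)))
      has_real_derivative real n ^ r * (dN p (Suc r) (real n * x - a) * real n - dN p (Suc r) (real n * x - b) * real n
         - dN p (Suc r) (real n * x - c) * real n)) (at x)"
    by (intro DERIV_cmult DERIV_diff dN_chain assms)
  moreover have "real n ^ r * (dN p (Suc r) (real n * x - a) * real n - dN p (Suc r) (real n * x - b) * real n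
         - dN p (Suc r) (real n * x - c) * real n) = Hf p (Suc r) n a b c x"
    unfolding Hf_def by (simp add: algebra_simps)
  ultimately show ?thesis unfolding Hf_def[abs_def] by simp
qed

lemma funpow_Hf:
  assumes "a \<in> \<int>" "b \<in> \<int>" "c \<in> \<int>"
  shows "r < p \<Longrightarrow> (deriv ^^ r) (Hf p 0 n a b c) = Hf p r n a b c"
proof (induction r)
  case 0 show ?case by simp
next
  case (Suc r)
  have "(deriv ^^ Suc r) (Hf p 0 n a b c) = deriv (Hf p r n a b c)" using Suc by simp
  also have "\<dots> = Hf p (Suc r) n a b c"
    by (rule ext, rule DERIV_imp_deriv, rule Hf_deriv) (use Suc.prems assms in auto)
  finally show ?case .
qed

lemma funpow_Hf_p:
  assumes "a \<in> \<int>" "b \<in> \<int>" "c \<in> \<int>" "1 \<le> p" "real n * x \<notin> \<int>"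
  shows "(deriv ^^ p) (Hf p 0 n a b c) x = Hf p p n a b c x"
proof -
  obtain q where p: "p = Suc q" using assms(4) by (cases p) auto
  have "(deriv ^^ p) (Hf p 0 n a b c) x = deriv (Hf p q n a b c) x"
    using funpow_Hf[OF assms(1-3), of q p] p by simp
  also have "\<dots> = Hf p p n a b c x"
    by (rule DERIV_imp_deriv) (use Hf_deriv[OF _ _ assms(1-3), of q p n x] p assms(5) in simp)
  finally show ?thesis .
qed

lemma local_funpow:
  assumes "open U" "\<And>y. y \<in> U \<Longrightarrow> f y = g y"
  shows "x \<in> U \<Longrightarrow> (deriv ^^ r) f x = (deriv ^^ r) g x"
proof (induction r arbitrary: x)
  case 0 then show ?case using assms by simp
next
  case (Suc r)
  have ev: "eventually (\<lambda>y. (deriv ^^ r) f y = (deriv ^^ r) g y) (nhds x)"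
    unfolding eventually_nhds using Suc.IH Suc.prems assms(1) by blast
  show ?case using deriv_cong_ev[OF ev refl] by simp
qed


declare cardB.simps(2)[simp del]

lemma alpha_eq: assumes "r \<le> p" shows "alphaSeq p r k = Icorr p r (real k)"
proof (cases "k \<le> p")
  case True
  have "2 * r < 2 * p + 1" using assms by simp
  then show ?thesis unfolding alphaSeq_def using True Icorr_eq[OF assms, of "real k"]
    by (simp add: funpow_deriv_dN)
next
  case False
  have "dN (2 * p + 1) (2 * r) (real p + 1 - real k) = 0"
    by (rule dN_le0) (use assms False in auto)
  then show ?thesis unfolding alphaSeq_def using False Icorr_eq[OF assms, of "real k"] by simp
qed

lemma toep_eq: assumes "r \<le> p" shows "toepM (alphaSeq p r) i j = Icorr p r (real i - real j)"
proof -
  have "toepM (alphaSeq p r) i j = Icorr p r (real (nat \<bar>int i - int j\<bar>))"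
    unfolding toepM_def alpha_eq[OF assms] ..
  also have "real (nat \<bar>int i - int j\<bar>) = \<bar>real i - real j\<bar>" by simp
  also have "Icorr p r \<bar>real i - real j\<bar> = Icorr p r (real i - real j)"
    by (cases "real i - real j \<ge> 0") (auto simp: Icorr_neg[of p r "real i - real j", symmetric])
  finally show ?thesis .
qed

lemma hank_eq: assumes "r \<le> p" "1 \<le> i" "i \<le> n" "1 \<le> j" "j \<le> n"
  shows "hankM (alphaSeq p r) n i j = Icorr p r (real i + real j - 1) + Icorr p r (2 * real n + 1 - real i - real j)"
proof -
  have a: "real (i + j - 1) = real i + real j - 1" using assms by simp
  have b: "real (2 * n + 1 - i - j) = 2 * real n + 1 - real i - real j" using assms by simp
  show ?thesis unfolding hankM_def alpha_eq[OF assms(1)] a b ..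
qed

lemma Phi_bdd: "\<exists>B. \<forall>u. \<bar>ps p r a u - ps p r b u - ps p r c u\<bar> \<le> B"
proof -
  obtain B where B: "\<And>t. \<bar>dN p r t\<bar> \<le> B" using dN_bdd by blast
  have "\<bar>ps p r a u - ps p r b u - ps p r c u\<bar> \<le> 3 * B" for u
    using B[of "u - a"] B[of "u - b"] B[of "u - c"] unfolding ps_def by linarith
  then show ?thesis by blast
qed

lemma image_div: assumes "n > 0" shows "(\<lambda>x. x / real n) ` {0..real n} = {0..1}"
proof
  show "(\<lambda>x. x / real n) ` {0..real n} \<subseteq> {0..1}" using assms by (auto simp: field_simps)
  show "{0..1} \<subseteq> (\<lambda>x. x / real n) ` {0..real n}"
  proof
    fix x :: real assume x: "x \<in> {0..1}"
    have "x = (real n * x) / real n" using assms by simp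
    moreover have "real n * x \<in> {0..real n}" using x assms by (auto simp: mult_left_le)
    ultimately show "x \<in> (\<lambda>x. x / real n) ` {0..real n}" by blast
  qed
qed

theorem mainTheorem13:
  fixes p n r :: nat
  assumes "p \<ge> 1" and "even p" and "real n \<ge> real p + real p / 2" and "r \<le> p"
  shows "\<forall>i\<in>{1..n}. \<forall>j\<in>{1..n}.
           Xbar p r n i j = real n powi (2 * int r - 1)
             * (toepM (alphaSeq p r) i j - hankM (alphaSeq p r) n i j)"
proof (intro ballI)
  fix i j assume ii: "i \<in> {1..n}" and jj: "j \<in> {1..n}"
  then have i: "1 \<le> i" "i \<le> n" and j: "1 \<le> j" "j \<le> n" by auto
  obtain m where pm: "p = 2 * m" using assms(2) by (elim evenE)
  have m1: "1 \<le> m" using pm assms(1) by simp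
  have nm: "3 * m \<le> n" using assms(3) pm by simp
  have n0: "n > 0" using nm m1 by simp
  have rn0: "real n > 0" using n0 by simp
  define ea where "ea = (\<lambda>k::nat. real k - 1 - real m)"
  define eb where "eb = (\<lambda>k::nat. - real k - real m)"
  define ec where "ec = (\<lambda>k::nat. 2 * real n - real k - real m)"
  have Zs: "ea k \<in> \<int>" "eb k \<in> \<int>" "ec k \<in> \<int>" for k
    unfolding ea_def eb_def ec_def by (intro Ints_diff Ints_minus Ints_mult; simp)+
  define U where "U = {x::real. - 1/2 < real n * x \<and> real n * x < real n + 1/2}"
  have oU: "open U" unfolding U_def
    by (intro open_Collect_conj open_Collect_less continuous_intros)
  have U01: "x \<in> U" if "x \<in> {0..1}" for x
  proof -
    have "0 \<le> real n * x" "real n * x \<le> real n" using that rn0 by (auto simp: mult_left_le)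
    then show ?thesis unfolding U_def by auto
  qed
  have der: "(deriv ^^ r) (redB p n k) x = Hf p r n (ea k) (eb k) (ec k) x"
    if k: "1 \<le> k" "k \<le> n" and x: "x \<in> {0..1}" "real n * x \<notin> \<int>" for k x
  proof -
    have loc: "redB p n k y = Hf p 0 n (ea k) (eb k) (ec k) y" if "y \<in> U" for y
      using redB_local[OF pm m1 nm k, of y] that unfolding U_def Hf_def ea_def eb_def ec_def by simp
    have "(deriv ^^ r) (redB p n k) x = (deriv ^^ r) (Hf p 0 n (ea k) (eb k) (ec k)) x"
      by (rule local_funpow[OF oU loc U01[OF x(1)]])
    also have "\<dots> = Hf p r n (ea k) (eb k) (ec k) x"
    proof (cases "r < p")
      case True then show ?thesis using funpow_Hf[OF Zs, of r p n] by simp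
    next
      case False then have "r = p" using assms(4) by simp
      then show ?thesis using funpow_Hf_p[OF Zs assms(1) x(2)] by simp
    qed
    finally show ?thesis .
  qed
  define P where "P u = (ps p r (ea i) u - ps p r (eb i) u - ps p r (ec i) u) * (ps p r (ea j) u - ps p r (eb j) u - ps p r (ec j) u)" for u
  define Q where "Q = Icorr p r (real i - real j) - Icorr p r (real i + real j - 1) - Icorr p r (2 * real n + 1 - real i - real j)"
  have QW: "(\<integral>u. indicator {0..real n} u * P u \<partial>lborel) = Q"
    unfolding P_def Q_def ea_def eb_def ec_def by (rule Wmain[OF pm m1 nm i j assms(4)])
  have intP: "integrable lborel (\<lambda>u. indicator {0..real n} u * P u)"
  proof -
    obtain B1 where B1: "\<And>u. \<bar>ps p r (ea i) u - ps p r (eb i) u - ps p r (ec i) u\<bar> \<le> B1" using Phi_bdd by blast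
    obtain B2 where B2: "\<And>u. \<bar>ps p r (ea j) u - ps p r (eb j) u - ps p r (ec j) u\<bar> \<le> B2" using Phi_bdd by blast
    have B10: "0 \<le> B1" using B1[of 0] by linarith
    have "integrable lborel (\<lambda>u. (indicator {0..real n} u * (ps p r (ea i) u - ps p r (eb i) u - ps p r (ec i) u))
        * (ps p r (ea j) u - ps p r (eb j) u - ps p r (ec j) u))"
    proof (rule integrable_mult_cs[where Bf=B1 and Bg=B2 and a=0 and b="real n"])
      show "\<bar>indicator {0..real n} t * (ps p r (ea i) t - ps p r (eb i) t - ps p r (ec i) t)\<bar> \<le> B1" for t
        using B1[of t] B10 by (auto simp: indicator_def)
    qed (use B2 in \<open>auto simp: indicator_def\<close>)
    then show ?thesis unfolding P_def by (simp add: mult.assoc)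
  qed
  have hP0: "((\<lambda>u. indicator {0..real n} u * P u) has_integral Q) UNIV"
    using has_integral_integral_lborel[OF intP] unfolding QW .
  have hP: "(P has_integral Q) {0..real n}"
    using hP0 unfolding indicator_times_eq_if(1) by (simp only: has_integral_restrict_UNIV)
  have hPs: "((\<lambda>x. P (real n * x)) has_integral (1 / real n) * Q) {0..1}"
    using has_integral_stretch_real[OF hP, of "real n"] rn0 unfolding image_div[OF n0] by simp
  have hF: "((\<lambda>x. real n ^ (2*r) * P (real n * x)) has_integral real n ^ (2*r) * ((1 / real n) * Q)) {0..1}"
    by (rule has_integral_mult_right[OF hPs])
  define Bad where "Bad = (\<lambda>k::nat. real k / real n) ` {0..n}"
  have fBad: "finite Bad" unfolding Bad_def by simp
  have notInt: "real n * x \<notin> \<int>" if "x \<in> {0..1} - Bad" for x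
  proof
    assume "real n * x \<in> \<int>"
    then obtain z where z: "real n * x = real_of_int z" by (auto elim: Ints_cases)
    have "0 \<le> real n * x" "real n * x \<le> real n" using that rn0 by (auto simp: mult_left_le)
    then have z0: "0 \<le> z" "z \<le> int n" using z by linarith+
    have "x = real (nat z) / real n" using z z0 rn0 by (simp add: field_simps)
    moreover have "nat z \<in> {0..n}" using z0 by auto
    ultimately have "x \<in> Bad" unfolding Bad_def by blast
    then show False using that by blast
  qed
  have e2: "real n ^ (2*r) = real n ^ r * real n ^ r" by (simp add: mult_2 power_add)
  have hX: "((\<lambda>x. (deriv ^^ r) (redB p n i) x * (deriv ^^ r) (redB p n j) x) has_integral
      real n ^ (2*r) * ((1 / real n) * Q)) {0..1}"
  proof (rule has_integral_spike_finite[OF fBad _ hF])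
    fix x assume x: "x \<in> {0..1} - Bad"
    have xi: "(deriv ^^ r) (redB p n i) x = Hf p r n (ea i) (eb i) (ec i) x"
      using der[OF i, of x] x notInt[OF x] by blast
    have xj: "(deriv ^^ r) (redB p n j) x = Hf p r n (ea j) (eb j) (ec j) x"
      using der[OF j, of x] x notInt[OF x] by blast
    show "(deriv ^^ r) (redB p n i) x * (deriv ^^ r) (redB p n j) x = real n ^ (2*r) * P (real n * x)"
      unfolding xi xj Hf_def P_def ps_def e2 by (simp only: mult_ac)
  qed
  have X: "Xbar p r n i j = real n ^ (2*r) * ((1 / real n) * Q)"
    unfolding Xbar_def using hX by (rule integral_unique)
  have ir: "2 * int r = int (2*r)" by simp
  have pw: "real n powi (2 * int r - 1) = real n ^ (2*r) / real n"
    using rn0 unfolding ir by (simp add: power_int_diff power_int_of_nat del: of_nat_mult)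
  show "Xbar p r n i j = real n powi (2 * int r - 1) * (toepM (alphaSeq p r) i j - hankM (alphaSeq p r) n i j)"
    unfolding X pw toep_eq[OF assms(4)] hank_eq[OF assms(4) i j] Q_def by simp
qed


end
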